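(* Let $n\geq 2$. In the double-edge digraph of the clustered graph of overlapping $n$-permutations, every directed cycle passes through exactly $n-1$ distinct clusters.
   Context: An $n$-permutation is a permutation $\pi_1\cdots\pi_n$ of $\{1,\ldots,n\}$. For a word $w$ of distinct numbers, $\mathrm{red}(w)$ is the permutation obtained by replacing the $i$-th smallest letter by $i$. For an $(n-1)$-permutation $\tau$, the cluster with signature $\tau$ is the set of all $n$-permutations $\pi$ with $\mathrm{red}(\pi_1\cdots\pi_{n-1})=\tau$. The clustered graph of overlapping $n$-permutations is the directed multigraph (loops allowed) whose vertices are the $(n-1)!$ clusters and in which every $n$-permutation $\pi$ contributes exactly one edge, going from the cluster containing $\pi$ to the cluster with signature $\mathrm{red}(\pi_2\cdots\pi_n)$. A double edge from $X$ to $Y$ is a pair of parallel edges from $X$ to $Y$. It is known that no pair of clusters is joined by three parallel edges, and that each cluster is the tail of exactly one double edge and the head of exactly one double edge. The double-edge digraph has the clusters as vertices and one arc $X\to Y$ for each double edge from $X$ to $Y$; by the preceding facts it is a disjoint union of directed cycles (a loop counting as a cycle through one cluster). *)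

theory Defs
  imports Main
begin

definition is_perm :: "nat \<Rightarrow> nat list \<Rightarrow> bool" where
  "is_perm n w \<longleftrightarrow> length w = n \<and> distinct w \<and> set w = {1..n}"

definition red :: "nat list \<Rightarrow> nat list" where
  "red w = map (\<lambda>x. card {y \<in> set w. y \<le> x}) w"

(* Edges of the clustered graph from cluster X to cluster Y (signatures):
   the n-permutations pi with red(pi_1..pi_{n-1}) = X and red(pi_2..pi_n) = Y. *)
definition edges :: "nat \<Rightarrow> nat list \<Rightarrow> nat list \<Rightarrow> nat list set" where
  "edges n X Y = {p. is_perm n p \<and> red (butlast p) = X \<and> red (tl p) = Y}"

definition double_arc :: "nat \<Rightarrow> nat list \<Rightarrow> nat list \<Rightarrow> bool" where
  "double_arc n X Y \<longleftrightarrow> card (edges n X Y) \<ge> 2"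

(* A directed cycle in the double-edge digraph: a nonempty list of distinct clusters
   (given by their signatures, (n-1)-permutations) X_0,...,X_{k-1} with arcs
   X_i -> X_{(i+1) mod k}; a loop is a cycle with k = 1. *)
definition double_cycle :: "nat \<Rightarrow> nat list list \<Rightarrow> bool" where
  "double_cycle n cs \<longleftrightarrow> cs \<noteq> [] \<and> distinct cs \<and> (\<forall>X\<in>set cs. is_perm (n - 1) X) \<and>
     (\<forall>i < length cs. double_arc n (cs ! i) (cs ! ((i + 1) mod length cs)))"

end

theory Submission
  imports Defs
begin

definition ff :: "nat \<Rightarrow> nat \<Rightarrow> nat" where
  "ff v x = (if v < x then x - 1 else x)"

lemma rank_card:
  assumes "x \<in> {1..n::nat} - {v}" "v \<in> {1..n}"
  shows "card {y \<in> {1..n} - {v}. y \<le> x} = ff v x"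
proof -
  have "{y \<in> {1..n} - {v}. y \<le> x} = {1..x} - {v}" using assms by auto
  moreover have "card ({1..x} - {v}) = ff v x"
    using assms by (auto simp: card_Diff_singleton_if ff_def)
  ultimately show ?thesis by simp
qed

lemma red_nth: "i < length w \<Longrightarrow> red w ! i = card {y \<in> set w. y \<le> w ! i}"
  by (simp add: red_def)

lemma red_len[simp]: "length (red w) = length w"
  by (simp add: red_def)

lemma perm_facts:
  assumes "is_perm n p" "n \<ge> 2"
  shows "set (butlast p) = {1..n} - {last p}" "set (tl p) = {1..n} - {hd p}"
    "last p = p ! (n - 1)" "hd p = p ! 0" "last p \<in> {1..n}" "hd p \<in> {1..n}"
proof -
  have ne: "p \<noteq> []" "length p = n" "distinct p" "set p = {1..n}" using assms by (auto simp: is_perm_def)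
  have e1: "p = butlast p @ [last p]" using ne by simp
  have "distinct (butlast p @ [last p])" using ne(3) e1 by metis
  then have "last p \<notin> set (butlast p)" by simp
  moreover have "set p = set (butlast p) \<union> {last p}" using e1 by (metis Un_insert_right set_append empty_set list.simps(15) sup_bot_right)
  ultimately show "set (butlast p) = {1..n} - {last p}" using ne by auto
  have e2: "p = hd p # tl p" using ne by simp
  have "distinct (hd p # tl p)" using ne(3) e2 by metis
  then have "hd p \<notin> set (tl p)" by simp
  moreover have "set p = insert (hd p) (set (tl p))" using e2 by (metis list.simps(15))
  ultimately show "set (tl p) = {1..n} - {hd p}" using ne by auto
  show "last p = p ! (n - 1)" using ne by (simp add: last_conv_nth)
  show "hd p = p ! 0" using ne by (simp add: hd_conv_nth)
  show "last p \<in> {1..n}" "hd p \<in> {1..n}" using ne by auto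
qed

lemma red_butlast:
  assumes "is_perm n p" "n \<ge> 2" "i < n - 1"
  shows "red (butlast p) ! i = ff (p ! (n-1)) (p ! i)"
proof -
  note F = perm_facts[OF assms(1,2)]
  have ne: "length p = n" "distinct p" "set p = {1..n}" using assms by (auto simp: is_perm_def)
  have bi: "butlast p ! i = p ! i" using assms ne by (simp add: nth_butlast)
  have "p ! i \<noteq> p ! (n-1)" using ne assms by (simp add: nth_eq_iff_index_eq)
  moreover have "p ! i \<in> {1..n}" using ne assms nth_mem[of i p] by simp
  ultimately have "p ! i \<in> {1..n} - {last p}" using F by auto
  then show ?thesis using rank_card[of "p!i" n "last p"] F assms ne
    by (simp add: red_nth bi)
qed

lemma red_tl:
  assumes "is_perm n p" "n \<ge> 2" "i < n - 1"
  shows "red (tl p) ! i = ff (p ! 0) (p ! Suc i)"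
proof -
  note F = perm_facts[OF assms(1,2)]
  have ne: "length p = n" "distinct p" "set p = {1..n}" using assms by (auto simp: is_perm_def)
  have bi: "tl p ! i = p ! Suc i" using assms ne by (simp add: nth_tl)
  have "p ! Suc i \<noteq> p ! 0" using ne assms by (simp add: nth_eq_iff_index_eq)
  moreover have "p ! Suc i \<in> {1..n}" using ne assms by (metis nth_mem less_diff_conv add.commute plus_1_eq_Suc)
  ultimately have "p ! Suc i \<in> {1..n} - {hd p}" using F by auto
  then show ?thesis using rank_card[of "p! Suc i" n "hd p"] F assms ne
    by (simp add: red_nth bi)
qed

lemma key_arith:
  fixes u v u' v' :: nat
  assumes "u \<noteq> v" "u' \<noteq> v'" "ff v u = ff v' u'" "ff u v = ff u' v'" "\<not> (u = u' \<and> v = v')"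
  shows "u = v + 1 \<or> v = u + 1"
  using assms unfolding ff_def by (auto split: if_splits)

lemma ff_inj: "x \<noteq> v \<Longrightarrow> y \<noteq> v \<Longrightarrow> ff v x = ff v y \<Longrightarrow> x = (y::nat)"
  unfolding ff_def by (auto split: if_splits)

lemma two_elems:
  assumes "2 \<le> card A" obtains x y where "x \<in> A" "y \<in> A" "x \<noteq> y"
proof -
  have "finite A" using assms by (metis card.infinite not_numeral_le_zero)
  have "\<not> card A \<le> Suc 0" using assms by simp
  then show ?thesis using card_le_Suc0_iff_eq[OF \<open>finite A\<close>] that by blast
qed

lemma double_rot:
  assumes "n \<ge> 2" "double_arc n X Y"
  shows "Y = rotate1 X"
proof -
  obtain p q where pq: "p \<in> edges n X Y" "q \<in> edges n X Y" "p \<noteq> q"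
    using assms two_elems unfolding double_arc_def by metis
  have P: "is_perm n p" "red (butlast p) = X" "red (tl p) = Y"
   and Q: "is_perm n q" "red (butlast q) = X" "red (tl q) = Y" using pq by (auto simp: edges_def)
  have lp: "length p = n" "distinct p" "set p = {1..n}"
   and lq: "length q = n" "distinct q" "set q = {1..n}" using P Q by (auto simp: is_perm_def)
  define u v u' v' where "u = p!0" "v = p!(n-1)" "u' = q!0" "v' = q!(n-1)"
  have uv: "u \<noteq> v" "u' \<noteq> v'" using lp lq assms(1) by (auto simp: u_v_u'_v'_def nth_eq_iff_index_eq)
  have X0: "X ! 0 = ff v u" "X ! 0 = ff v' u'"
    using red_butlast[OF P(1) assms(1), of 0] red_butlast[OF Q(1) assms(1), of 0] P Q assms(1)
    by (auto simp: u_v_u'_v'_def)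
  have Yl: "Y ! (n-2) = ff u v" "Y ! (n-2) = ff u' v'"
    using red_tl[OF P(1) assms(1), of "n-2"] red_tl[OF Q(1) assms(1), of "n-2"] P Q assms(1)
    by (auto simp: u_v_u'_v'_def Suc_diff_Suc numeral_2_eq_2)
  have nn: "\<not> (u = u' \<and> v = v')"
  proof
    assume h: "u = u' \<and> v = v'"
    have "p = q"
    proof (rule nth_equalityI)
      show "length p = length q" using lp lq by simp
      fix i assume i: "i < length p"
      show "p ! i = q ! i"
      proof (cases "i = n - 1")
        case True then show ?thesis using h by (simp add: u_v_u'_v'_def)
      next
        case False
        then have i2: "i < n - 1" using i lp by simp
        have e: "ff v (p!i) = ff v' (q!i)"
          using red_butlast[OF P(1) assms(1) i2] red_butlast[OF Q(1) assms(1) i2] P Q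
          by (simp add: u_v_u'_v'_def)
        have "p!i \<noteq> p!(n-1)" using lp i2 nth_eq_iff_index_eq[of p i "n-1"] by simp
        moreover have "q!i \<noteq> q!(n-1)" using lq i2 nth_eq_iff_index_eq[of q i "n-1"] by simp
        ultimately have "ff v (p!i) = ff v (q!i)" "p!i \<noteq> v" "q!i \<noteq> v" using h e unfolding u_v_u'_v'_def by simp_all
        then show ?thesis using ff_inj[of "p!i" v "q!i"] by blast
      qed
    qed
    then show False using pq by simp
  qed
  have ea: "ff v u = ff v' u'" using X0 by simp
  have eb: "ff u v = ff u' v'" using Yl by simp
  have adj: "u = v + 1 \<or> v = u + 1" by (rule key_arith[OF uv ea eb nn])
  show ?thesis
  proof (rule nth_equalityI)
    have lX: "length X = n - 1" "length Y = n - 1" using P lp by auto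
    show "length Y = length (rotate1 X)" using lX by simp
    fix j assume j: "j < length Y"
    show "Y ! j = rotate1 X ! j"
    proof (cases "j = n - 2")
      case True
      have "Suc (n-2) = n - 1" using assms(1) by simp
      then have "rotate1 X ! j = X ! 0" using True lX assms(1) by (simp add: nth_rotate1)
      then show ?thesis using True Yl X0 adj by (auto simp: ff_def)
    next
      case False
      then have j2: "Suc j < n - 1" using j lX by simp
      have r: "rotate1 X ! j = X ! Suc j" using lX j2 by (simp add: nth_rotate1)
      have a: "X ! Suc j = ff v (p ! Suc j)" using red_butlast[OF P(1) assms(1) j2] P by (simp add: u_v_u'_v'_def)
      have b: "Y ! j = ff u (p ! Suc j)" using red_tl[OF P(1) assms(1)] j lX P by (simp add: u_v_u'_v'_def)
      have "p ! Suc j \<noteq> u" "p ! Suc j \<noteq> v" using lp j2 by (auto simp: u_v_u'_v'_def nth_eq_iff_index_eq)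
      then show ?thesis using r a b adj by (auto simp: ff_def)
    qed
  qed
qed

lemma rot_ne:
  assumes "distinct xs" "0 < k" "k < length xs"
  shows "rotate k xs \<noteq> xs"
proof
  assume h: "rotate k xs = xs"
  have ne: "xs \<noteq> []" using assms(3) by auto
  have "rotate k xs ! 0 = xs ! (k mod length xs)" using nth_rotate[of 0 xs k] ne by simp
  then have "xs ! k = xs ! 0" using h assms(3) by simp
  then show False using assms ne nth_eq_iff_index_eq[of xs k 0] by simp
qed

theorem lemma4:
  fixes n :: nat and cs :: "nat list list"
  assumes "n \<ge> 2" and "double_cycle n cs"
  shows "length cs = n - 1"
proof -
  define k where "k = length cs"
  have D: "cs \<noteq> []" "distinct cs" "\<And>X. X \<in> set cs \<Longrightarrow> is_perm (n - 1) X"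
    "\<And>i. i < k \<Longrightarrow> double_arc n (cs ! i) (cs ! ((i + 1) mod k))"
    using assms(2) unfolding double_cycle_def k_def by auto
  have k0: "0 < k" using D(1) k_def by simp
  have step: "cs ! ((i+1) mod k) = rotate1 (cs ! i)" if "i < k" for i
    using double_rot[OF assms(1) D(4)[OF that]] .
  have R: "i < k \<Longrightarrow> cs ! i = rotate i (cs ! 0)" for i
  proof (induction i)
    case 0 then show ?case by simp
  next
    case (Suc i)
    have i: "i < k" using Suc.prems by simp
    have "cs ! Suc i = cs ! ((i+1) mod k)" using Suc.prems by simp
    also have "\<dots> = rotate1 (cs ! i)" using step i by blast
    also have "\<dots> = rotate1 (rotate i (cs ! 0))" using Suc.IH i by simp
    finally show ?case by simp
  qed
  have c0: "is_perm (n-1) (cs ! 0)" using D(3) k0 k_def by simp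
  have len0: "length (cs ! 0) = n - 1" "distinct (cs ! 0)" using c0 by (auto simp: is_perm_def)
  have "cs ! 0 = rotate1 (cs ! (k - 1))" using step[of "k-1"] k0 by simp
  also have "\<dots> = rotate k (cs ! 0)" using R[of "k-1"] k0 rotate_Suc[of "k-1" "cs!0"] by simp
  finally have fix0: "rotate k (cs ! 0) = cs ! 0" by simp
  have "\<not> k < n - 1"
  proof
    assume "k < n - 1"
    then have "rotate k (cs ! 0) \<noteq> cs ! 0" using rot_ne[OF len0(2) k0] len0(1) by simp
    then show False using fix0 by simp
  qed
  moreover have "\<not> k > n - 1"
  proof
    assume "k > n - 1"
    then have "cs ! (n-1) = rotate (n-1) (cs ! 0)" using R[of "n-1"] by simp
    also have "\<dots> = cs ! 0" using rotate_id[of "n-1" "cs!0"] len0(1) by simp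
    finally have "cs ! (n-1) = cs ! 0" .
    moreover have "n - 1 < length cs" "0 < length cs" using \<open>k > n - 1\<close> k_def by auto
    ultimately show False using D(2) assms(1) nth_eq_iff_index_eq[of cs "n-1" 0] by simp
  qed
  ultimately show ?thesis using k_def by simp
qed

end
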